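(* Consider problem (P2): $\sup_{u\in\Gamma^{nT}}J(u)$, and problem (P3): $$\max_{u,\rho,\lambda,\mu,\nu,\eta}\ -\lambda\epsilon(\beta)-\frac1N\sum_{e\in\mathcal E,t\in\mathcal T,l\in\mathcal L}\bar f_e\bar\rho_e\eta^{(l)}_e(t)+\frac1N\sum_{l\in\mathcal L}\langle\nu^{(l)},\rho^{(l)}\rangle$$ subject to, for all $l\in\mathcal L=\{1,\dots,N\}$, $e\in\mathcal E$, $t\in\mathcal T$: $\big(\bar f_e+(\bar\rho_e-\bar f_e/\bar u_e)u_e(t)\big)\eta^{(l)}_e(t)-\mu^{(l)}_e(t)\ge0$; $\nu^{(l)}=\mu^{(l)}+\frac1Tu$; $\|\nu^{(l)}\|_\star\le\lambda$; $\eta^{(l)}\ge0$; $u\in\Gamma^{nT}$; and each $\rho^{(l)}\in\mathbb{R}^{nT}$ is the admissible sample trajectory generated under $u$ from the sample $\varpi^{(l)}$ (dynamics and admissibility constraints with $\varpi^{(l)}$ in place of $\varpi$). Then (P2) is equivalent to (P3) in the sense that their optimal objective values coincide and the set of optimizers of (P2) is the projection (onto $u$) of the set of optimizers of (P3). Further, for any feasible point $(u,\rho,\lambda,\mu,\nu,\eta)$ of (P3) with objective value $\hat J(u)$, one has $\mathrm{Prob}^N\big(\mathbb{E}_{\mathbb{P}(u)}[H(u;\rho)]\ge\hat J(u)\big)\ge1-\beta$.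
   Context: Highway model. Fix integers $n\ge1$, $T\ge1$; segments $e\in\mathcal{E}=\{1,\dots,n\}$ (segment $e\ge2$ has preceding segment $e-1$), time slots $t\in\mathcal{T}=\{0,\dots,T-1\}$. For each $e$: constants $h_e>0$, $\bar\rho_e>0$, $\bar f_e>0$, $\bar u_e>0$ with $\bar u_e\bar\rho_e>\bar f_e$; $\tau_e=\bar f_e/(\bar u_e\bar\rho_e-\bar f_e)$; critical density $\rho^c_e(v)=\tau_e\bar\rho_e\bar u_e/(\tau_e\bar u_e+v)$. Finite set $\Gamma\subset(0,\infty)$ of speed limits; $u=(u_e(t))\in\Gamma^{nT}$. Random vector $\varpi=(\omega,\rho(0),r^{in},r^{o})$ ($\omega(t)\ge0$, $\rho(0)\in\mathbb{R}^n_{\ge0}$, $r^{in}_e(t),r^{o}_e(t)\in[0,1)$) with distribution $\mathbb{P}_\varpi$, assumed light-tailed ($\mathbb{E}[\exp(\|\varpi\|^a)]<\infty$ for some $a>1$). Given $u$ and $\varpi$, trajectory $\rho\in\mathbb{R}^{nT}$: $\rho_1(t+1)=\rho_1(t)+h_1(\omega(t)-u_1(t)\rho_1(t))$; for $e\ge2$, $\rho_e(t+1)=\rho_e(t)+h_e\kappa_e(t)u_{e-1}(t)\rho_{e-1}(t)-h_eu_e(t)\rho_e(t)$, $\kappa_e(t)=\frac{1-r^{o}_{e-1}(t)}{1-r^{in}_e(t)}$, with admissibility $\kappa_e(t)u_{e-1}(t)\rho_{e-1}(t)\le\min\{\bar f_e,\tau_e\bar u_e(\bar\rho_e-\rho_e(t))\}$.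 $\mathbb{P}(u)$ is the law of $\rho$ under $\varpi\sim\mathbb{P}_\varpi$, supported on $\mathcal{Z}(u)=\{\rho:0\le\rho_e(t)\le\rho^c_e(u_e(t))\}$. $H(u;\rho)=\frac1T\sum_{e,t}\rho_e(t)u_e(t)$. Given $N$ i.i.d. samples $\varpi^{(l)}$, $l\in\mathcal L$, with trajectories $\rho^{(l)}$, $\hat{\mathbb{P}}(u)=\frac1N\sum_l\delta_{\rho^{(l)}}$; $\beta\in(0,1)$ and $\epsilon(\beta)>0$ is a Wasserstein radius such that $\mathrm{Prob}^N(\mathbb{P}(u)\in\mathcal{P}(u))\ge1-\beta$, where $\mathcal{P}(u)=\mathbb{B}_{\epsilon(\beta)}(\hat{\mathbb{P}}(u))\cap\mathcal{M}_{lt}(\mathcal{Z}(u))$ ($\mathbb{B}_\epsilon$ = Wasserstein ball w.r.t. the 1-norm, $\mathcal M_{lt}$ = light-tailed distributions); $J(u)=\inf_{\mathbb{Q}\in\mathcal{P}(u)}\mathbb{E}_{\mathbb{Q}}[H(u;\rho)]$. $\|\cdot\|$ is the 1-norm and $\|\cdot\|_\star$ its dual (the $\infty$-norm). $\mathrm{Prob}^N$ is the product probability over the $N$ samples. *)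

theory Defs
  imports "HOL-Probability.Probability"
begin

text \<open>Highway parameters: h, rho-bar, f-bar, u-bar (indexed by segment e = 1..n).\<close>
record hwy =
  hh :: "nat \<Rightarrow> real"
  rhobar :: "nat \<Rightarrow> real"
  fbar :: "nat \<Rightarrow> real"
  ubar :: "nat \<Rightarrow> real"

text \<open>Random vector varpi = (omega, rho(0), r_in, r_out); r_in e t, r_out e t.\<close>
record varpi =
  om :: "nat \<Rightarrow> real"
  rho0 :: "nat \<Rightarrow> real"
  rin :: "nat \<Rightarrow> nat \<Rightarrow> real"
  rout :: "nat \<Rightarrow> nat \<Rightarrow> real"

text \<open>Index set E x T = {1..n} x {0..T-1}; vectors in R^{nT} are extensional
  functions on it.\<close>
definition Idx :: "nat \<Rightarrow> nat \<Rightarrow> (nat \<times> nat) set" where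
  "Idx n T = {1..n} \<times> {..<T}"

definition Mtraj :: "nat \<Rightarrow> nat \<Rightarrow> (nat \<times> nat \<Rightarrow> real) measure" where
  "Mtraj n T = PiM (Idx n T) (\<lambda>_. borel)"

definition norm1 :: "(nat \<times> nat) set \<Rightarrow> (nat \<times> nat \<Rightarrow> real) \<Rightarrow> real" where
  "norm1 I x = (\<Sum>i\<in>I. \<bar>x i\<bar>)"

definition dual_norm :: "(nat \<times> nat) set \<Rightarrow> (nat \<times> nat \<Rightarrow> real) \<Rightarrow> real" where
  "dual_norm I x = Max ((\<lambda>i. \<bar>x i\<bar>) ` I)"

definition varpi_norm :: "nat \<Rightarrow> nat \<Rightarrow> varpi \<Rightarrow> real" where
  "varpi_norm n T w = (\<Sum>t<T. \<bar>om w t\<bar>) + (\<Sum>e\<in>{1..n}. \<bar>rho0 w e\<bar>)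
     + (\<Sum>e\<in>{1..n}. \<Sum>t<T. \<bar>rin w e t\<bar> + \<bar>rout w e t\<bar>)"

definition tau :: "hwy \<Rightarrow> nat \<Rightarrow> real" where
  "tau p e = fbar p e / (ubar p e * rhobar p e - fbar p e)"

definition rhoc :: "hwy \<Rightarrow> nat \<Rightarrow> real \<Rightarrow> real" where
  "rhoc p e v = tau p e * rhobar p e * ubar p e / (tau p e * ubar p e + v)"

definition kappa :: "varpi \<Rightarrow> nat \<Rightarrow> nat \<Rightarrow> real" where
  "kappa w e t = (1 - rout w (e - 1) t) / (1 - rin w e t)"

text \<open>Dynamics: rho_traj p u w t e = rho_e(t).\<close>
fun rho_traj :: "hwy \<Rightarrow> (nat \<times> nat \<Rightarrow> real) \<Rightarrow> varpi \<Rightarrow> nat \<Rightarrow> nat \<Rightarrow> real" where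
  "rho_traj p u w 0 e = rho0 w e"
| "rho_traj p u w (Suc t) e =
     (if e = 1 then rho_traj p u w t 1 + hh p 1 * (om w t - u (1, t) * rho_traj p u w t 1)
      else rho_traj p u w t e + hh p e * kappa w e t * u (e - 1, t) * rho_traj p u w t (e - 1)
             - hh p e * u (e, t) * rho_traj p u w t e)"

definition traj_vec :: "nat \<Rightarrow> nat \<Rightarrow> hwy \<Rightarrow> (nat \<times> nat \<Rightarrow> real) \<Rightarrow> varpi \<Rightarrow> (nat \<times> nat \<Rightarrow> real)" where
  "traj_vec n T p u w = restrict (\<lambda>(e, t). rho_traj p u w t e) (Idx n T)"

definition admissible :: "nat \<Rightarrow> nat \<Rightarrow> hwy \<Rightarrow> (nat \<times> nat \<Rightarrow> real) \<Rightarrow> varpi \<Rightarrow> bool" where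
  "admissible n T p u w \<longleftrightarrow>
     (\<forall>e\<in>{2..n}. \<forall>t<T. kappa w e t * u (e - 1, t) * rho_traj p u w t (e - 1)
        \<le> min (fbar p e) (tau p e * ubar p e * (rhobar p e - rho_traj p u w t e)))"

definition Zset :: "nat \<Rightarrow> nat \<Rightarrow> hwy \<Rightarrow> (nat \<times> nat \<Rightarrow> real) \<Rightarrow> (nat \<times> nat \<Rightarrow> real) set" where
  "Zset n T p u = {x \<in> space (Mtraj n T). \<forall>(e, t)\<in>Idx n T. 0 \<le> x (e, t) \<and> x (e, t) \<le> rhoc p e (u (e, t))}"

definition Hcost :: "nat \<Rightarrow> nat \<Rightarrow> (nat \<times> nat \<Rightarrow> real) \<Rightarrow> (nat \<times> nat \<Rightarrow> real) \<Rightarrow> real" where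
  "Hcost n T u x = (1 / real T) * (\<Sum>i\<in>Idx n T. x i * u i)"

definition controls :: "nat \<Rightarrow> nat \<Rightarrow> real set \<Rightarrow> (nat \<times> nat \<Rightarrow> real) set" where
  "controls n T \<Gamma> = PiE (Idx n T) (\<lambda>_. \<Gamma>)"

definition dists_on :: "'a measure \<Rightarrow> 'a set \<Rightarrow> 'a measure set" where
  "dists_on M Z = {Q. prob_space Q \<and> sets Q = sets M \<and> (AE x in Q. x \<in> Z)}"

definition lt_dists :: "(nat \<times> nat) set \<Rightarrow> (nat \<times> nat \<Rightarrow> real) measure \<Rightarrow> (nat \<times> nat \<Rightarrow> real) set
    \<Rightarrow> (nat \<times> nat \<Rightarrow> real) measure set" where
  "lt_dists I M Z = {Q \<in> dists_on M Z. \<exists>a>1. (\<integral>\<^sup>+ x. ennreal (exp (norm1 I x powr a)) \<partial>Q) < \<infinity>}"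

definition couplings :: "'a measure \<Rightarrow> 'a measure \<Rightarrow> 'a measure \<Rightarrow> ('a \<times> 'a) measure set" where
  "couplings M Q P = {\<pi>. sets \<pi> = sets (M \<Otimes>\<^sub>M M) \<and> distr \<pi> M fst = Q \<and> distr \<pi> M snd = P}"

definition wasserstein :: "(nat \<times> nat) set \<Rightarrow> (nat \<times> nat \<Rightarrow> real) measure
    \<Rightarrow> (nat \<times> nat \<Rightarrow> real) measure \<Rightarrow> (nat \<times> nat \<Rightarrow> real) measure \<Rightarrow> ennreal" where
  "wasserstein I M Q P = (INF \<pi>\<in>couplings M Q P. \<integral>\<^sup>+ z. ennreal (norm1 I (\<lambda>i. fst z i - snd z i)) \<partial>\<pi>)"

definition empirical :: "nat \<Rightarrow> nat \<Rightarrow> hwy \<Rightarrow> nat \<Rightarrow> (nat \<Rightarrow> varpi) \<Rightarrow> (nat \<times> nat \<Rightarrow> real)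
    \<Rightarrow> (nat \<times> nat \<Rightarrow> real) measure" where
  "empirical n T p N ws u = distr (uniform_count_measure {..<N}) (Mtraj n T) (\<lambda>l. traj_vec n T p u (ws l))"

definition ambiguity_set :: "nat \<Rightarrow> nat \<Rightarrow> hwy \<Rightarrow> real \<Rightarrow> nat \<Rightarrow> (nat \<Rightarrow> varpi)
    \<Rightarrow> (nat \<times> nat \<Rightarrow> real) \<Rightarrow> (nat \<times> nat \<Rightarrow> real) measure set" where
  "ambiguity_set n T p \<epsilon> N ws u =
     {Q. wasserstein (Idx n T) (Mtraj n T) Q (empirical n T p N ws u) \<le> ennreal \<epsilon>}
     \<inter> lt_dists (Idx n T) (Mtraj n T) (Zset n T p u)"

definition Jval :: "nat \<Rightarrow> nat \<Rightarrow> hwy \<Rightarrow> real \<Rightarrow> nat \<Rightarrow> (nat \<Rightarrow> varpi) \<Rightarrow> (nat \<times> nat \<Rightarrow> real) \<Rightarrow> ereal" where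
  "Jval n T p \<epsilon> N ws u = (INF Q\<in>ambiguity_set n T p \<epsilon> N ws u. ereal (\<integral>x. Hcost n T u x \<partial>Q))"

type_synonym vec = "nat \<times> nat \<Rightarrow> real"
type_synonym p3var = "vec \<times> (nat \<Rightarrow> vec) \<times> real \<times> (nat \<Rightarrow> vec) \<times> (nat \<Rightarrow> vec) \<times> (nat \<Rightarrow> vec)"

definition feas3 :: "nat \<Rightarrow> nat \<Rightarrow> hwy \<Rightarrow> real set \<Rightarrow> nat \<Rightarrow> (nat \<Rightarrow> varpi) \<Rightarrow> p3var set" where
  "feas3 n T p \<Gamma> N ws = {(u, \<rho>, lam, \<mu>, \<nu>, \<eta>).
     u \<in> controls n T \<Gamma> \<and>
     (\<forall>l<N. \<rho> l = traj_vec n T p u (ws l) \<and> admissible n T p u (ws l)) \<and>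
     (\<forall>l<N. \<forall>(e, t)\<in>Idx n T.
        (fbar p e + (rhobar p e - fbar p e / ubar p e) * u (e, t)) * \<eta> l (e, t) - \<mu> l (e, t) \<ge> 0 \<and>
        \<nu> l (e, t) = \<mu> l (e, t) + (1 / real T) * u (e, t) \<and>
        \<eta> l (e, t) \<ge> 0) \<and>
     (\<forall>l<N. dual_norm (Idx n T) (\<nu> l) \<le> lam)}"

definition obj3 :: "nat \<Rightarrow> nat \<Rightarrow> hwy \<Rightarrow> real \<Rightarrow> nat \<Rightarrow> p3var \<Rightarrow> real" where
  "obj3 n T p \<epsilon> N q = (case q of (u, \<rho>, lam, \<mu>, \<nu>, \<eta>) \<Rightarrow>
     - lam * \<epsilon>
     - (1 / real N) * (\<Sum>l<N. \<Sum>(e, t)\<in>Idx n T. fbar p e * rhobar p e * \<eta> l (e, t))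
     + (1 / real N) * (\<Sum>l<N. \<Sum>i\<in>Idx n T. \<nu> l i * \<rho> l i))"

end

theory Submission
  imports Defs
begin


lemma knapsack:
  fixes K :: "'a set" and c r :: "'a \<Rightarrow> real" and B :: real
  assumes finK: "finite K" and r0: "\<forall>k\<in>K. 0 \<le> r k" and c0: "\<forall>k\<in>K. 0 \<le> c k" and B0: "0 < B"
  shows "\<exists>lam d. 0 \<le> lam \<and> (\<forall>k\<in>K. 0 \<le> d k \<and> d k \<le> r k) \<and> sum d K \<le> B \<and>
      (\<Sum>k\<in>K. c k * d k) = lam * B + (\<Sum>k\<in>K. max (c k - lam) 0 * r k)"
proof (cases "sum r K \<le> B")
  case True
  have "(\<Sum>k\<in>K. c k * r k) = 0 * B + (\<Sum>k\<in>K. max (c k - 0) 0 * r k)"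
    using c0 by (auto intro!: sum.cong)
  then show ?thesis using True r0 by (intro exI[of _ 0] exI[of _ r]) auto
next
  case False
  define A where "A t = (\<Sum>k\<in>{k\<in>K. c k \<ge> t}. r k)" for t
  define A' where "A' t = (\<Sum>k\<in>{k\<in>K. c k > t}. r k)" for t
  define C where "C = c ` K"
  have finC: "finite C" using finK C_def by auto
  have Kne: "K \<noteq> {}" using False B0 by auto
  have CMin: "Min C \<in> C" using finC Kne C_def by auto
  have "{k\<in>K. c k \<ge> Min C} = K" using finC C_def by auto
  then have "A (Min C) = sum r K" by (simp add: A_def)
  then have ne: "Min C \<in> {t\<in>C. A t \<ge> B}" using CMin False by auto
  define lam where "lam = Max {t\<in>C. A t \<ge> B}"
  have fin2: "finite {t\<in>C. A t \<ge> B}" using finC by auto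
  have lamin: "lam \<in> C" "A lam \<ge> B" using Max_in[OF fin2] ne lam_def by auto
  have lam0: "lam \<ge> 0" using lamin(1) c0 C_def by auto
  have A'lt: "A' lam < B"
  proof (cases "{k\<in>K. c k > lam} = {}")
    case True then show ?thesis using B0 unfolding A'_def by (simp only: sum.empty)
  next
    case False
    define t1 where "t1 = Min (c ` {k\<in>K. c k > lam})"
    have fin3: "finite (c ` {k\<in>K. c k > lam})" using finK by auto
    have t1in: "t1 \<in> c ` {k\<in>K. c k > lam}" using Min_in[OF fin3] False t1_def by auto
    have t1C: "t1 \<in> C" "t1 > lam" using t1in C_def by auto
    have "{k\<in>K. c k \<ge> t1} = {k\<in>K. c k > lam}"
    proof
      show "{k\<in>K. c k \<ge> t1} \<subseteq> {k\<in>K. c k > lam}" using t1C by auto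
      show "{k\<in>K. c k > lam} \<subseteq> {k\<in>K. c k \<ge> t1}"
        using Min_le[OF fin3] t1_def by auto
    qed
    then have "A t1 = A' lam" by (simp add: A_def A'_def)
    show ?thesis
    proof (rule ccontr)
      assume "\<not> A' lam < B"
      then have "t1 \<in> {t\<in>C. A t \<ge> B}" using t1C \<open>A t1 = A' lam\<close> by auto
      then have "t1 \<le> lam" using Max_ge[OF fin2] lam_def by auto
      then show False using t1C by auto
    qed
  qed
  define E where "E = {k\<in>K. c k = lam}"
  have "{k\<in>K. c k \<ge> lam} = {k\<in>K. c k > lam} \<union> E" "{k\<in>K. c k > lam} \<inter> E = {}"
    by (auto simp: E_def)
  then have Asplit: "A lam = A' lam + sum r E"
    unfolding A_def A'_def by (simp add: finK E_def sum.union_disjoint)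
  have sE: "sum r E > 0" using Asplit lamin A'lt by linarith
  define th where "th = (B - A' lam) / sum r E"
  have th0: "0 \<le> th" "th \<le> 1" using sE A'lt Asplit lamin by (auto simp: th_def field_simps)
  have thE: "th * sum r E = B - A' lam" using sE by (simp add: th_def)
  define d where "d k = (if c k > lam then r k else 0) + th * (if c k = lam then r k else 0)" for k
  have s1: "(\<Sum>k\<in>K. (if c k > lam then r k else 0)) = A' lam"
    by (simp add: A'_def sum.inter_filter[OF finK])
  have s2: "(\<Sum>k\<in>K. (if c k = lam then r k else 0)) = sum r E"
    by (simp add: E_def sum.inter_filter[OF finK])
  have sumd: "sum d K = B"
    unfolding d_def sum.distrib sum_distrib_left[symmetric] s1 s2 thE by simp
  have "(\<Sum>k\<in>K. c k * d k) = (\<Sum>k\<in>K. (if c k > lam then c k * r k else 0)) + th * lam * (\<Sum>k\<in>K. (if c k = lam then r k else 0))"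
    unfolding sum_distrib_left sum.distrib[symmetric] by (rule sum.cong) (auto simp: d_def algebra_simps)
  also have "\<dots> = (\<Sum>k\<in>K. (if c k > lam then c k * r k else 0)) + lam * (B - A' lam)"
  proof -
    have "th * lam * (\<Sum>k\<in>K. (if c k = lam then r k else 0)) = lam * (th * sum r E)" using s2 by simp
    then show ?thesis by (simp only: thE)
  qed
  also have "\<dots> = lam * B + ((\<Sum>k\<in>K. (if c k > lam then c k * r k else 0)) - lam * (\<Sum>k\<in>K. (if c k > lam then r k else 0)))"
    using s1 by (simp add: algebra_simps)
  also have "\<dots> = lam * B + (\<Sum>k\<in>K. max (c k - lam) 0 * r k)"
    unfolding sum_distrib_left sum_subtractf[symmetric] by (auto intro!: sum.cong simp: algebra_simps max_def)
  finally have eq: "(\<Sum>k\<in>K. c k * d k) = lam * B + (\<Sum>k\<in>K. max (c k - lam) 0 * r k)" .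
  have "\<forall>k\<in>K. 0 \<le> d k \<and> d k \<le> r k"
    using r0 th0 by (auto simp: d_def mult_le_cancel_right1 mult_left_le_one_le)
  then show ?thesis using lam0 sumd eq by (intro exI[of _ lam] exI[of _ d]) auto
qed


lemma finI: "finite (Idx n T)" by (simp add: Idx_def)

lemma space_M: "space (Mtraj n T) = PiE (Idx n T) (\<lambda>_. UNIV)"
  by (simp add: Mtraj_def space_PiM)

lemma comp_meas: "i \<in> Idx n T \<Longrightarrow> (\<lambda>x. x i) \<in> borel_measurable (Mtraj n T)"
  unfolding Mtraj_def by (rule measurable_component_singleton)

lemma H_meas: "Hcost n T u \<in> borel_measurable (Mtraj n T)"
  unfolding Hcost_def using comp_meas by (intro borel_measurable_times borel_measurable_sum measurable_const) auto

lemma cost_meas: "(\<lambda>z. norm1 (Idx n T) (\<lambda>i. fst z i - snd z i)) \<in> borel_measurable (Mtraj n T \<Otimes>\<^sub>M Mtraj n T)"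
  unfolding norm1_def using comp_meas
  by (intro borel_measurable_sum borel_measurable_abs borel_measurable_diff measurable_compose[OF measurable_fst] measurable_compose[OF measurable_snd]) auto

lemma norm1_meas: "norm1 (Idx n T) \<in> borel_measurable (Mtraj n T)"
  unfolding norm1_def using comp_meas
  by (intro borel_measurable_sum borel_measurable_abs) auto

lemma Z_sets: "Zset n T p u \<in> sets (Mtraj n T)"
proof -
  have "Zset n T p u = {x\<in>space (Mtraj n T). \<forall>i\<in>Idx n T. 0 \<le> x i \<and> x i \<le> rhoc p (fst i) (u i)}"
    by (auto simp: Zset_def Idx_def)
  also have "\<dots> \<in> sets (Mtraj n T)"
    using comp_meas finI by (intro predE pred_intros_finite pred_intros_logic borel_measurable_le measurable_const) auto
  finally show ?thesis .
qed


lemma uc_meas: "g \<in> A \<rightarrow> space M \<Longrightarrow> g \<in> measurable (uniform_count_measure A) M"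
  by (subst measurable_cong_sets[OF sets_uniform_count_measure_count_space refl])
     (simp add: measurable_count_space_eq1)

lemma uc_int:
  fixes f :: "'a \<Rightarrow> real"
  assumes "finite A" "A \<noteq> {}"
  shows "integrable (uniform_count_measure A) f"
proof -
  interpret prob_space "uniform_count_measure A" using prob_space_uniform_count_measure assms by blast
  have "AE x in uniform_count_measure A. norm (f x) \<le> Max ((\<lambda>a. norm (f a)) ` A)"
    using assms by (intro AE_I2) (auto simp: space_uniform_count_measure)
  moreover have "f \<in> borel_measurable (uniform_count_measure A)"
    by (subst measurable_cong_sets[OF sets_uniform_count_measure_count_space refl]) simp
  ultimately show ?thesis by (rule integrable_const_bound)
qed

lemma uc_distr:
  fixes f :: "'b \<Rightarrow> real"
  assumes "finite A" "A \<noteq> {}" "g \<in> A \<rightarrow> space M" "f \<in> borel_measurable M"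
  shows "integrable (distr (uniform_count_measure A) M g) f"
    "integral\<^sup>L (distr (uniform_count_measure A) M g) f = (\<Sum>a\<in>A. f (g a)) / card A"
proof -
  have g: "g \<in> measurable (uniform_count_measure A) M" using uc_meas assms by blast
  show "integrable (distr (uniform_count_measure A) M g) f"
    using integrable_distr_eq[OF g assms(4)] uc_int assms by blast
  show "integral\<^sup>L (distr (uniform_count_measure A) M g) f = (\<Sum>a\<in>A. f (g a)) / card A"
    using integral_distr[OF g assms(4)] integral_uniform_count_measure[OF assms(1)] by simp
qed

lemma uc_distr_nn:
  fixes f :: "'b \<Rightarrow> real"
  assumes "finite A" "A \<noteq> {}" "g \<in> A \<rightarrow> space M" "f \<in> borel_measurable M" "\<And>x. 0 \<le> f x"
  shows "(\<integral>\<^sup>+x. ennreal (f x) \<partial>distr (uniform_count_measure A) M g) = ennreal ((\<Sum>a\<in>A. f (g a)) / card A)"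
  using nn_integral_eq_integral[OF uc_distr(1)[OF assms(1-4)]] uc_distr(2)[OF assms(1-4)] assms(5) by simp



lemma coef_rhoc:
  assumes "fbar p e > 0" "rhobar p e > 0" "ubar p e > 0" "ubar p e * rhobar p e > fbar p e" "v \<ge> 0"
  shows "(fbar p e + (rhobar p e - fbar p e / ubar p e) * v) * rhoc p e v = fbar p e * rhobar p e"
    "fbar p e + (rhobar p e - fbar p e / ubar p e) * v > 0"
proof -
  define D where "D = ubar p e * rhobar p e - fbar p e"
  have D: "D > 0" using assms by (simp add: D_def)
  have t: "tau p e = fbar p e / D" by (simp add: tau_def D_def)
  have "rhobar p e - fbar p e / ubar p e = D / ubar p e" using assms by (simp add: D_def field_simps)
  moreover have "rhoc p e v = fbar p e * rhobar p e * ubar p e / (fbar p e * ubar p e + v * D)"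
    using D assms by (simp add: rhoc_def t field_simps)
  moreover have "fbar p e * ubar p e + v * D > 0" using D assms by (simp add: add_pos_nonneg)
  ultimately show "(fbar p e + (rhobar p e - fbar p e / ubar p e) * v) * rhoc p e v = fbar p e * rhobar p e"
    "fbar p e + (rhobar p e - fbar p e / ubar p e) * v > 0"
    using assms D by (auto simp: field_simps)
qed



lemma pointwise:
  assumes hwy: "\<forall>e\<in>{1..n}. hh p e > 0 \<and> rhobar p e > 0 \<and> fbar p e > 0 \<and> ubar p e > 0 \<and> ubar p e * rhobar p e > fbar p e"
    and upos: "\<forall>i\<in>Idx n T. u i > 0"
    and cons: "\<forall>(e, t)\<in>Idx n T.
        (fbar p e + (rhobar p e - fbar p e / ubar p e) * u (e, t)) * \<eta> (e, t) - \<mu> (e, t) \<ge> 0 \<and>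
        \<nu> (e, t) = \<mu> (e, t) + (1 / real T) * u (e, t) \<and> \<eta> (e, t) \<ge> 0"
    and nub: "\<forall>i\<in>Idx n T. \<bar>\<nu> i\<bar> \<le> lam"
    and x: "x \<in> Zset n T p u"
  shows "(\<Sum>i\<in>Idx n T. \<nu> i * \<rho> i) - (\<Sum>(e, t)\<in>Idx n T. fbar p e * rhobar p e * \<eta> (e, t))
     \<le> Hcost n T u x + lam * norm1 (Idx n T) (\<lambda>i. x i - \<rho> i)"
proof -
  have per: "\<nu> i * \<rho> i - fbar p (fst i) * rhobar p (fst i) * \<eta> i \<le> (1 / real T) * (x i * u i) + lam * \<bar>x i - \<rho> i\<bar>"
    if i: "i \<in> Idx n T" for i
  proof -
    obtain e t where et: "i = (e, t)" by (cases i)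
    have e: "e \<in> {1..n}" using i et by (auto simp: Idx_def)
    define cf where "cf = fbar p e + (rhobar p e - fbar p e / ubar p e) * u (e, t)"
    have c1: "cf * \<eta> i - \<mu> i \<ge> 0" "\<nu> i = \<mu> i + (1 / real T) * u i" "\<eta> i \<ge> 0"
      using cons i et cf_def by auto
    have cr: "cf * rhoc p e (u (e,t)) = fbar p e * rhobar p e" "cf > 0"
      using coef_rhoc[of p e "u (e,t)"] hwy e upos i et cf_def by auto
    have x0: "0 \<le> x i" "x i \<le> rhoc p e (u (e,t))" using x i et by (auto simp: Zset_def)
    have "\<mu> i * x i \<le> cf * \<eta> i * x i" using c1 x0 by (intro mult_right_mono) auto
    also have "\<dots> \<le> cf * \<eta> i * rhoc p e (u (e,t))"
      using c1 x0 cr by (intro mult_left_mono) auto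
    also have "\<dots> = fbar p e * rhobar p e * \<eta> i" using cr by (simp add: algebra_simps)
    finally have A: "\<mu> i * x i \<le> fbar p e * rhobar p e * \<eta> i" .
    have "\<nu> i * (\<rho> i - x i) \<le> \<bar>\<nu> i\<bar> * \<bar>x i - \<rho> i\<bar>"
      by (metis abs_ge_self abs_minus_commute abs_mult)
    also have "\<dots> \<le> lam * \<bar>x i - \<rho> i\<bar>" using nub i by (intro mult_right_mono) auto
    finally have B: "\<nu> i * (\<rho> i - x i) \<le> lam * \<bar>x i - \<rho> i\<bar>" .
    have "\<nu> i * \<rho> i = \<mu> i * x i + (1 / real T) * (x i * u i) + \<nu> i * (\<rho> i - x i)"
      using c1 by (simp add: algebra_simps add_divide_distrib[symmetric])
    then show ?thesis using A B et by simp
  qed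
  have "(\<Sum>(e, t)\<in>Idx n T. fbar p e * rhobar p e * \<eta> (e, t)) = (\<Sum>i\<in>Idx n T. fbar p (fst i) * rhobar p (fst i) * \<eta> i)"
    by (simp add: case_prod_beta)
  moreover have "(\<Sum>i\<in>Idx n T. \<nu> i * \<rho> i - fbar p (fst i) * rhobar p (fst i) * \<eta> i)
      \<le> (\<Sum>i\<in>Idx n T. (1 / real T) * (x i * u i) + lam * \<bar>x i - \<rho> i\<bar>)"
    using per by (rule sum_mono)
  ultimately show ?thesis
    by (simp add: Hcost_def norm1_def sum_subtractf sum.distrib sum_distrib_left)
qed



lemma norm1_nn[simp]: "0 \<le> norm1 I x" by (simp add: norm1_def sum_nonneg)

lemma Zmem: "x \<in> Zset n T p u \<Longrightarrow> i \<in> Idx n T \<Longrightarrow> 0 \<le> x i \<and> x i \<le> rhoc p (fst i) (u i)"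
  unfolding Zset_def by (cases i) fastforce

lemma weak_duality:
  assumes n1: "n \<ge> 1" and T1: "T \<ge> 1" and N1: "N \<ge> 1"
    and hwy: "\<forall>e\<in>{1..n}. hh p e > 0 \<and> rhobar p e > 0 \<and> fbar p e > 0 \<and> ubar p e > 0 \<and> ubar p e * rhobar p e > fbar p e"
    and Gp: "\<Gamma> \<subseteq> {0<..}"
    and q: "(u, \<rho>, lam, \<mu>, \<nu>, \<eta>) \<in> feas3 n T p \<Gamma> N ws"
    and Q: "Q \<in> ambiguity_set n T p \<epsilon> N ws u" and eps: "\<epsilon> > 0"
  shows "obj3 n T p \<epsilon> N (u, \<rho>, lam, \<mu>, \<nu>, \<eta>) \<le> (\<integral>x. Hcost n T u x \<partial>Q)"
proof -
  define I where "I = Idx n T"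
  define M where "M = Mtraj n T"
  define Z where "Z = Zset n T p u"
  have finI: "finite I" by (simp add: I_def finI)
  have Ine: "(1, 0) \<in> I" using n1 T1 by (auto simp: I_def Idx_def)
  have upos: "\<forall>i\<in>I. u i > 0" using q Gp by (auto simp: feas3_def controls_def I_def PiE_def Pi_def)
  have dn: "\<forall>l<N. dual_norm I (\<nu> l) \<le> lam" using q by (simp add: feas3_def I_def)
  have nub: "\<forall>l<N. \<forall>i\<in>I. \<bar>\<nu> l i\<bar> \<le> lam"
  proof (intro allI impI ballI)
    fix l i assume "l < N" "i \<in> I"
    then have "\<bar>\<nu> l i\<bar> \<le> dual_norm I (\<nu> l)" unfolding dual_norm_def using finI by (intro Max_ge) auto
    then show "\<bar>\<nu> l i\<bar> \<le> lam" using dn \<open>l < N\<close> by fastforce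
  qed
  have lam0: "lam \<ge> 0" using nub[rule_format, of 0 "(1,0)"] N1 Ine by linarith
  have rho: "\<forall>l<N. \<rho> l = traj_vec n T p u (ws l)" using q by (simp add: feas3_def)
  define s where "s l = (\<Sum>i\<in>I. \<nu> l i * \<rho> l i) - (\<Sum>(e, t)\<in>I. fbar p e * rhobar p e * \<eta> l (e, t))" for l
  have obj: "obj3 n T p \<epsilon> N (u, \<rho>, lam, \<mu>, \<nu>, \<eta>) = - lam * \<epsilon> + (\<Sum>l<N. s l) / N"
    by (simp add: obj3_def s_def I_def sum_subtractf divide_simps)
  have pt: "s l \<le> Hcost n T u x + lam * norm1 I (\<lambda>i. x i - \<rho> l i)" if "l < N" "x \<in> Z" for l x
    unfolding s_def I_def
    by (rule pointwise[OF hwy]) (use upos q that nub in \<open>auto simp: I_def Z_def feas3_def\<close>)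
  define \<phi> where "\<phi> y = Max ((\<lambda>l. s l - lam * norm1 I (\<lambda>i. y i - \<rho> l i)) ` {..<N})" for y
  have tri: "norm1 I (\<lambda>i. x i - r i) \<le> norm1 I (\<lambda>i. x i - y i) + norm1 I (\<lambda>i. y i - r i)" for x y r :: vec
    unfolding norm1_def sum.distrib[symmetric] by (rule sum_mono) linarith
  have phile: "\<phi> y \<le> Hcost n T u x + lam * norm1 I (\<lambda>i. x i - y i)" if "x \<in> Z" for x y
  proof -
    have "s l - lam * norm1 I (\<lambda>i. y i - \<rho> l i) \<le> Hcost n T u x + lam * norm1 I (\<lambda>i. x i - y i)" if l: "l < N" for l
    proof -
      have "s l \<le> Hcost n T u x + lam * norm1 I (\<lambda>i. x i - \<rho> l i)" using pt l \<open>x \<in> Z\<close> by blast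
      also have "\<dots> \<le> Hcost n T u x + lam * (norm1 I (\<lambda>i. x i - y i) + norm1 I (\<lambda>i. y i - \<rho> l i))"
        using tri lam0 by (simp add: mult_left_mono)
      finally show ?thesis by (simp add: algebra_simps)
    qed
    then show ?thesis unfolding \<phi>_def using N1 by (subst Max_le_iff) (auto simp: lessThan_empty_iff)
  qed
  have phige: "s l \<le> \<phi> (\<rho> l)" if "l < N" for l
  proof -
    have "s l = s l - lam * norm1 I (\<lambda>i. \<rho> l i - \<rho> l i)" by (simp add: norm1_def)
    also have "\<dots> \<le> \<phi> (\<rho> l)" unfolding \<phi>_def using that by (intro Max_ge) (auto intro!: image_eqI[where x=l])
    finally show ?thesis .
  qed
  have phimeas: "\<phi> \<in> borel_measurable M"
    unfolding \<phi>_def using norm1_meas[of n T]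
    by (intro borel_measurable_Max) (auto simp: M_def I_def norm1_def intro!: borel_measurable_diff borel_measurable_times borel_measurable_sum borel_measurable_abs comp_meas)
  define Ph where "Ph = empirical n T p N ws u"
  define g where "g = (\<lambda>l. traj_vec n T p u (ws l))"
  have gsp: "g \<in> {..<N} \<rightarrow> space M"
    by (auto simp: g_def traj_vec_def M_def space_M)
  have Ph_def': "Ph = distr (uniform_count_measure {..<N}) M g"
    by (simp add: Ph_def empirical_def M_def g_def)
  have W: "wasserstein I M Q Ph \<le> ennreal \<epsilon>" using Q by (simp add: ambiguity_set_def I_def M_def Ph_def)
  have Qd: "prob_space Q" "sets Q = sets M" "AE x in Q. x \<in> Z"
    using Q by (auto simp: ambiguity_set_def lt_dists_def dists_on_def M_def Z_def)
  have Hm: "Hcost n T u \<in> borel_measurable M" by (simp add: M_def H_meas)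
  have Zs: "Z \<in> sets M" by (simp add: M_def Z_def Z_sets)
  have Hb: "\<bar>Hcost n T u x\<bar> \<le> (1 / real T) * (\<Sum>i\<in>I. rhoc p (fst i) (u i) * u i)" if "x \<in> Z" for x
  proof -
    have "0 \<le> (\<Sum>i\<in>I. x i * u i)" using that upos Zmem[of x n T p u] by (intro sum_nonneg) (auto simp: Z_def I_def less_imp_le)
    moreover have "(\<Sum>i\<in>I. x i * u i) \<le> (\<Sum>i\<in>I. rhoc p (fst i) (u i) * u i)"
      using that upos Zmem[of x n T p u] by (intro sum_mono mult_right_mono) (auto simp: Z_def I_def less_imp_le)
    ultimately show ?thesis by (simp add: Hcost_def I_def divide_right_mono)
  qed
  have main: "obj3 n T p \<epsilon> N (u, \<rho>, lam, \<mu>, \<nu>, \<eta>) \<le> (\<integral>x. Hcost n T u x \<partial>Q) + lam * \<delta>" if dp: "\<delta> > 0" for \<delta>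
  proof -
    have "wasserstein I M Q Ph < ennreal (\<epsilon> + \<delta>)"
      using W eps dp by (meson ennreal_lessI le_less_trans less_add_same_cancel1 order_less_le_trans add_pos_pos)
    then obtain \<pi> where pi: "\<pi> \<in> couplings M Q Ph"
      and pic: "(\<integral>\<^sup>+ z. ennreal (norm1 I (\<lambda>i. fst z i - snd z i)) \<partial>\<pi>) < ennreal (\<epsilon> + \<delta>)"
      unfolding wasserstein_def by (auto simp: INF_less_iff)
    have ps: "sets \<pi> = sets (M \<Otimes>\<^sub>M M)" "distr \<pi> M fst = Q" "distr \<pi> M snd = Ph"
      using pi by (auto simp: couplings_def)
    have mfst: "fst \<in> measurable \<pi> M" using measurable_cong_sets[OF ps(1) refl] measurable_fst by blast
    have msnd: "snd \<in> measurable \<pi> M" using measurable_cong_sets[OF ps(1) refl] measurable_snd by blast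
    have sp: "space \<pi> = space (M \<Otimes>\<^sub>M M)" using sets_eq_imp_space_eq[OF ps(1)] .
    interpret Q: prob_space Q by (rule Qd(1))
    have "emeasure \<pi> (space \<pi>) = 1"
    proof -
      have "emeasure Q (space Q) = 1" by (rule Q.emeasure_space_1)
      then have "emeasure (distr \<pi> M fst) (space M) = 1" using ps(2) Qd(2) sets_eq_imp_space_eq by metis
      moreover have "emeasure (distr \<pi> M fst) (space M) = emeasure \<pi> (fst -` space M \<inter> space \<pi>)"
        using mfst by (rule emeasure_distr) simp
      moreover have "fst -` space M \<inter> space \<pi> = space \<pi>" using measurable_space[OF mfst] by blast
      ultimately show ?thesis by simp
    qed
    then interpret pi: prob_space \<pi> by (rule prob_spaceI)
    have AEZ: "AE z in \<pi>. fst z \<in> Z"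
    proof -
      have "AE x in distr \<pi> M fst. x \<in> Z" unfolding ps(2) by (rule Qd(3))
      moreover have "{x\<in>space M. x \<in> Z} \<in> sets M" using Zs sets.sets_into_space[OF Zs] by (simp add: Int_absorb1 Collect_conj_eq Int_commute)
      ultimately show ?thesis using AE_distr_iff[OF mfst, of "\<lambda>x. x \<in> Z"] by simp
    qed
    define cst where "cst = (\<lambda>z::vec \<times> vec. norm1 I (\<lambda>i. fst z i - snd z i))"
    have cm: "cst \<in> borel_measurable \<pi>"
    proof -
      have "cst \<in> borel_measurable (M \<Otimes>\<^sub>M M)" unfolding cst_def I_def M_def by (rule cost_meas)
      then show ?thesis using measurable_cong_sets[OF ps(1) refl] by blast
    qed
    have cnn: "0 \<le> cst z" for z by (simp add: cst_def norm1_def sum_nonneg)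
    have cint: "integrable \<pi> cst"
      using pic by (intro integrableI_nonneg[OF cm]) (auto simp: cnn cst_def intro: less_trans[OF _ ennreal_less_top])
    have cle: "integral\<^sup>L \<pi> cst \<le> \<epsilon> + \<delta>"
    proof -
      have "ennreal (integral\<^sup>L \<pi> cst) < ennreal (\<epsilon> + \<delta>)"
        using nn_integral_eq_integral[OF cint] pic cnn by (simp add: cst_def)
      then show ?thesis using cnn by (simp add: ennreal_less_iff integral_nonneg)
    qed
    have Hfm: "(\<lambda>z. Hcost n T u (fst z)) \<in> borel_measurable \<pi>" using measurable_compose[OF mfst Hm] .
    have Hint: "integrable \<pi> (\<lambda>z. Hcost n T u (fst z))"
      by (rule pi.integrable_const_bound[OF _ Hfm]) (use AEZ Hb in \<open>auto elim!: eventually_mono\<close>)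
    have HQ: "(\<integral>x. Hcost n T u x \<partial>Q) = (\<integral>z. Hcost n T u (fst z) \<partial>\<pi>)"
      using integral_distr[OF mfst Hm] ps(2) by simp
    have phint: "integrable \<pi> (\<lambda>z. \<phi> (snd z))"
      using integrable_distr_eq[OF msnd phimeas] ps(3) uc_distr(1)[OF _ _ gsp phimeas] N1 by (simp add: Ph_def' lessThan_empty_iff)
    have phiI: "(\<integral>z. \<phi> (snd z) \<partial>\<pi>) = (\<Sum>l<N. \<phi> (g l)) / N"
      using integral_distr[OF msnd phimeas] ps(3) uc_distr(2)[OF _ _ gsp phimeas] N1 by (simp add: Ph_def' lessThan_empty_iff)
    have "(\<Sum>l<N. s l) \<le> (\<Sum>l<N. \<phi> (g l))"
      using phige rho by (intro sum_mono) (simp add: g_def)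
    then have sphi: "(\<Sum>l<N. s l) / N \<le> (\<integral>z. \<phi> (snd z) \<partial>\<pi>)"
      unfolding phiI by (simp add: divide_right_mono)
    have "0 \<le> (\<integral>z. Hcost n T u (fst z) + lam * cst z - \<phi> (snd z) \<partial>\<pi>)"
      using AEZ by (intro integral_nonneg_AE) (auto elim!: eventually_mono simp: cst_def phile)
    also have "\<dots> = (\<integral>z. Hcost n T u (fst z) \<partial>\<pi>) + lam * integral\<^sup>L \<pi> cst - (\<integral>z. \<phi> (snd z) \<partial>\<pi>)"
      using Hint cint phint by (simp add: integral_diff integral_add)
    finally have "(\<integral>z. \<phi> (snd z) \<partial>\<pi>) \<le> (\<integral>x. Hcost n T u x \<partial>Q) + lam * integral\<^sup>L \<pi> cst"
      using HQ by simp
    moreover have "lam * integral\<^sup>L \<pi> cst \<le> lam * (\<epsilon> + \<delta>)" using cle lam0 by (rule mult_left_mono)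
    ultimately show ?thesis using sphi obj by (simp add: algebra_simps)
  qed
  show ?thesis
  proof (rule field_le_epsilon)
    fix e :: real assume e: "e > 0"
    have "obj3 n T p \<epsilon> N (u, \<rho>, lam, \<mu>, \<nu>, \<eta>) \<le> (\<integral>x. Hcost n T u x \<partial>Q) + lam * (e / (lam + 1))"
      using e lam0 by (intro main) simp
    moreover have "lam * (e / (lam + 1)) \<le> e" using e lam0 by (simp add: field_simps)
    ultimately show "obj3 n T p \<epsilon> N (u, \<rho>, lam, \<mu>, \<nu>, \<eta>) \<le> (\<integral>x. Hcost n T u x \<partial>Q) + e" by linarith
  qed
qed


lemma primal_construct:
  assumes n1: "n \<ge> 1" and T1: "T \<ge> 1" and N1: "N \<ge> 1"
    and hwy: "\<forall>e\<in>{1..n}. hh p e > 0 \<and> rhobar p e > 0 \<and> fbar p e > 0 \<and> ubar p e > 0 \<and> ubar p e * rhobar p e > fbar p e"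
    and Gp: "\<Gamma> \<subseteq> {0<..}" and eps: "\<epsilon> > 0"
    and u: "u \<in> controls n T \<Gamma>"
    and samp: "\<forall>l<N. admissible n T p u (ws l) \<and> traj_vec n T p u (ws l) \<in> Zset n T p u"
  shows "\<exists>q Q. q \<in> feas3 n T p \<Gamma> N ws \<and> fst q = u \<and> Q \<in> ambiguity_set n T p \<epsilon> N ws u
     \<and> (\<integral>x. Hcost n T u x \<partial>Q) = obj3 n T p \<epsilon> N q"
proof -
  define I where "I = Idx n T"
  define M where "M = Mtraj n T"
  define Z where "Z = Zset n T p u"
  define rh where "rh = (\<lambda>l. traj_vec n T p u (ws l))"
  define c where "c i = (1 / real T) * u i" for i
  define K where "K = {..<N} \<times> I"
  have finI: "finite I" by (simp add: I_def finI)
  have Ine: "(1, 0) \<in> I" using n1 T1 by (auto simp: I_def Idx_def)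
  have finK: "finite K" using finI by (simp add: K_def)
  have upos: "\<forall>i\<in>I. u i > 0" using u Gp by (auto simp: controls_def I_def PiE_def Pi_def)
  have cpos: "\<forall>i\<in>I. c i > 0" using upos T1 by (simp add: c_def)
  have rhZ: "\<forall>l<N. rh l \<in> Z" using samp by (simp add: rh_def Z_def)
  have rh0: "\<forall>l<N. \<forall>i\<in>I. 0 \<le> rh l i \<and> rh l i \<le> rhoc p (fst i) (u i)"
    using rhZ Zmem by (auto simp: Z_def I_def)
  obtain lam d where lam0: "0 \<le> lam" and d: "\<forall>k\<in>K. 0 \<le> d k \<and> d k \<le> rh (fst k) (snd k)"
    and sd: "sum d K \<le> real N * \<epsilon>"
    and kn: "(\<Sum>k\<in>K. c (snd k) * d k) = lam * (real N * \<epsilon>) + (\<Sum>k\<in>K. max (c (snd k) - lam) 0 * rh (fst k) (snd k))"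
    using knapsack[OF finK, of "\<lambda>k. rh (fst k) (snd k)" "\<lambda>k. c (snd k)" "real N * \<epsilon>"] rh0 cpos N1 eps
    by (auto simp: K_def less_imp_le)
  define xs where "xs l = restrict (\<lambda>i. rh l i - d (l, i)) I" for l
  define \<nu> where "\<nu> = (\<lambda>l::nat. \<lambda>i. min (c i) lam)"
  define \<mu> where "\<mu> = (\<lambda>l::nat. \<lambda>i. min (c i) lam - c i)"
  define \<eta> where "\<eta> = (\<lambda>l::nat. \<lambda>i::nat\<times>nat. 0::real)"
  define q where "q = (u, rh, lam, \<mu>, \<nu>, \<eta>)"
  have dn: "dual_norm I (\<nu> l) \<le> lam" for l
    unfolding dual_norm_def using finI Ine cpos lam0 by (subst Max_le_iff) (auto simp: \<nu>_def)
  have feas: "q \<in> feas3 n T p \<Gamma> N ws"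
    unfolding feas3_def q_def using u samp dn cpos
    by (auto simp: rh_def I_def \<nu>_def \<mu>_def \<eta>_def c_def)
  have xsp: "xs \<in> {..<N} \<rightarrow> space M" by (auto simp: xs_def M_def space_M I_def)
  have xsZ: "xs l \<in> Z" if l: "l < N" for l
  proof -
    have "0 \<le> xs l i \<and> xs l i \<le> rhoc p (fst i) (u i)" if i: "i \<in> I" for i
    proof -
      have "0 \<le> d (l, i)" "d (l, i) \<le> rh l i" using d l i by (auto simp: K_def)
      moreover have "0 \<le> rh l i" "rh l i \<le> rhoc p (fst i) (u i)" using rh0 l i by auto
      ultimately show ?thesis using i by (simp add: xs_def)
    qed
    then show ?thesis using xsp l by (auto simp: Z_def Zset_def M_def I_def)
  qed
  have rhsp: "rh \<in> {..<N} \<rightarrow> space M" by (auto simp: rh_def traj_vec_def M_def space_M I_def)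
  have Nne: "{..<N} \<noteq> {}" using N1 by (auto simp: lessThan_empty_iff)
  define Q where "Q = distr (uniform_count_measure {..<N}) M xs"
  have xsm: "xs \<in> measurable (uniform_count_measure {..<N}) M" using uc_meas xsp by blast
  interpret U: prob_space "uniform_count_measure {..<N}" using prob_space_uniform_count_measure Nne by blast
  have Qprob: "prob_space Q" unfolding Q_def using xsm by (rule U.prob_space_distr)
  have QZ: "AE x in Q. x \<in> Z"
  proof -
    have "{x\<in>space M. x \<in> Z} \<in> sets M" using Z_sets[of n T p u] sets.sets_into_space[OF Z_sets[of n T p u]]
      by (simp add: Int_absorb1 Collect_conj_eq Int_commute Z_def M_def)
    moreover have "AE l in uniform_count_measure {..<N}. xs l \<in> Z"
      using xsZ by (intro AE_I2) (auto simp: space_uniform_count_measure)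
    ultimately show ?thesis unfolding Q_def using AE_distr_iff[OF xsm, of "\<lambda>x. x \<in> Z"] by simp
  qed
  have n1m: "norm1 I \<in> borel_measurable M" unfolding I_def M_def by (rule norm1_meas)
  have LT: "(\<integral>\<^sup>+ x. ennreal (exp (norm1 I x powr 2)) \<partial>Q) < \<infinity>"
  proof -
    have "(\<lambda>x. exp (norm1 I x powr 2)) \<in> borel_measurable M"
      using n1m by measurable
    then show ?thesis unfolding Q_def using uc_distr_nn[OF _ Nne xsp] by simp
  qed
  have Qlt: "Q \<in> lt_dists I M Z"
  proof -
    have Qs: "sets Q = sets M" by (simp add: Q_def)
    show ?thesis unfolding lt_dists_def dists_on_def using Qprob QZ LT Qs by (intro CollectI conjI exI[of _ 2]) auto
  qed
  define pr where "pr = (\<lambda>l. (xs l, rh l))"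
  have prsp: "pr \<in> {..<N} \<rightarrow> space (M \<Otimes>\<^sub>M M)" using xsp rhsp by (auto simp: pr_def space_pair_measure)
  have prm: "pr \<in> measurable (uniform_count_measure {..<N}) (M \<Otimes>\<^sub>M M)" using uc_meas prsp by blast
  define \<pi> where "\<pi> = distr (uniform_count_measure {..<N}) (M \<Otimes>\<^sub>M M) pr"
  have pic: "\<pi> \<in> couplings M Q (empirical n T p N ws u)"
  proof -
    have "distr \<pi> M fst = distr (uniform_count_measure {..<N}) M (fst \<circ> pr)"
      unfolding \<pi>_def by (rule distr_distr[OF measurable_fst prm])
    also have "fst \<circ> pr = xs" by (auto simp: pr_def)
    finally have 1: "distr \<pi> M fst = Q" by (simp add: Q_def)
    have "distr \<pi> M snd = distr (uniform_count_measure {..<N}) M (snd \<circ> pr)"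
      unfolding \<pi>_def by (rule distr_distr[OF measurable_snd prm])
    also have "snd \<circ> pr = rh" by (auto simp: pr_def)
    finally have 2: "distr \<pi> M snd = empirical n T p N ws u" by (simp add: empirical_def M_def rh_def)
    show ?thesis using 1 2 by (simp add: couplings_def \<pi>_def)
  qed
  have costeq: "norm1 I (\<lambda>i. fst (pr l) i - snd (pr l) i) = (\<Sum>i\<in>I. d (l, i))" if "l < N" for l
    using d that by (auto simp: norm1_def pr_def xs_def K_def intro!: sum.cong)
  have "(\<integral>\<^sup>+ z. ennreal (norm1 I (\<lambda>i. fst z i - snd z i)) \<partial>\<pi>) = ennreal ((\<Sum>l<N. norm1 I (\<lambda>i. fst (pr l) i - snd (pr l) i)) / N)"
    unfolding \<pi>_def using uc_distr_nn[OF _ Nne prsp, of "\<lambda>z. norm1 I (\<lambda>i. fst z i - snd z i)"] cost_meas[of n T]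
    by (simp add: I_def M_def)
  also have "(\<Sum>l<N. norm1 I (\<lambda>i. fst (pr l) i - snd (pr l) i)) = sum d K"
  proof -
    have "(\<Sum>l<N. norm1 I (\<lambda>i. fst (pr l) i - snd (pr l) i)) = (\<Sum>l<N. \<Sum>i\<in>I. d (l, i))"
      using costeq by simp
    also have "\<dots> = sum d K" unfolding K_def sum.cartesian_product by (simp add: case_prod_eta)
    finally show ?thesis .
  qed
  finally have "(\<integral>\<^sup>+ z. ennreal (norm1 I (\<lambda>i. fst z i - snd z i)) \<partial>\<pi>) \<le> ennreal \<epsilon>"
    using sd N1 by (auto intro!: ennreal_leI simp: divide_le_eq mult.commute)
  then have W: "wasserstein I M Q (empirical n T p N ws u) \<le> ennreal \<epsilon>"
    unfolding wasserstein_def using pic by (blast intro: INF_lower2)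
  have amb: "Q \<in> ambiguity_set n T p \<epsilon> N ws u"
    using W Qlt by (simp add: ambiguity_set_def I_def M_def Z_def)
  have HQ: "(\<integral>x. Hcost n T u x \<partial>Q) = (\<Sum>l<N. Hcost n T u (xs l)) / N"
  proof -
    have Hm: "Hcost n T u \<in> borel_measurable M" by (simp add: M_def H_meas)
    show ?thesis unfolding Q_def using uc_distr(2)[OF _ Nne xsp Hm] by simp
  qed
  have E1: "(\<Sum>l<N. Hcost n T u (xs l)) = (\<Sum>k\<in>K. c (snd k) * rh (fst k) (snd k) - c (snd k) * d k)"
    unfolding Hcost_def K_def sum_distrib_left sum.cartesian_product
    by (auto intro!: sum.cong simp: xs_def c_def I_def algebra_simps add_divide_distrib[symmetric])
  have E2: "(\<Sum>l<N. \<Sum>i\<in>I. \<nu> l i * rh l i) = (\<Sum>k\<in>K. min (c (snd k)) lam * rh (fst k) (snd k))"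
    unfolding K_def sum.cartesian_product by (auto intro!: sum.cong simp: \<nu>_def)
  have E3: "(\<Sum>k\<in>K. c (snd k) * rh (fst k) (snd k)) - (\<Sum>k\<in>K. max (c (snd k) - lam) 0 * rh (fst k) (snd k))
      = (\<Sum>k\<in>K. min (c (snd k)) lam * rh (fst k) (snd k))"
    unfolding sum_subtractf[symmetric] by (auto intro!: sum.cong simp: min_def max_def algebra_simps)
  have obj: "obj3 n T p \<epsilon> N q = - lam * \<epsilon> + (\<Sum>k\<in>K. min (c (snd k)) lam * rh (fst k) (snd k)) / N"
    using E2 by (simp add: obj3_def q_def \<eta>_def I_def divide_inverse)
  have "(\<integral>x. Hcost n T u x \<partial>Q) = obj3 n T p \<epsilon> N q"
    unfolding HQ E1 obj sum_subtractf kn E3[symmetric] using N1 by (simp add: field_simps)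
  then show ?thesis using feas amb by (intro exI[of _ q] exI[of _ Q]) (simp add: q_def)
qed

theorem theorem2:
  fixes n T N :: nat and p :: hwy and \<Gamma> :: "real set" and Pw :: "varpi measure"
    and \<beta> \<epsilon> :: real
  assumes n_ge: "n \<ge> 1" and T_ge: "T \<ge> 1" and N_ge: "N \<ge> 1"
    and hwy_ok: "\<forall>e\<in>{1..n}. hh p e > 0 \<and> rhobar p e > 0 \<and> fbar p e > 0 \<and> ubar p e > 0
                   \<and> ubar p e * rhobar p e > fbar p e"
    and Gamma_fin: "finite \<Gamma>" and Gamma_pos: "\<Gamma> \<subseteq> {0<..}"
    and Pw_prob: "prob_space Pw"
    and meas_om: "\<forall>t. (\<lambda>w. om w t) \<in> borel_measurable Pw"
    and meas_rho0: "\<forall>e. (\<lambda>w. rho0 w e) \<in> borel_measurable Pw"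
    and meas_rin: "\<forall>e t. (\<lambda>w. rin w e t) \<in> borel_measurable Pw"
    and meas_rout: "\<forall>e t. (\<lambda>w. rout w e t) \<in> borel_measurable Pw"
    and ranges: "\<forall>w\<in>space Pw. (\<forall>t<T. om w t \<ge> 0) \<and> (\<forall>e\<in>{1..n}. rho0 w e \<ge> 0) \<and>
                   (\<forall>e\<in>{1..n}. \<forall>t<T. 0 \<le> rin w e t \<and> rin w e t < 1 \<and> 0 \<le> rout w e t \<and> rout w e t < 1)"
    and light_tailed: "\<exists>a>1. (\<integral>\<^sup>+ w. ennreal (exp (varpi_norm n T w powr a)) \<partial>Pw) < \<infinity>"
    and model: "\<forall>w\<in>space Pw. \<forall>u\<in>controls n T \<Gamma>.
                  admissible n T p u w \<and> traj_vec n T p u w \<in> Zset n T p u"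
    and beta: "0 < \<beta>" "\<beta> < 1" and eps_pos: "\<epsilon> > 0"
    and radius: "\<forall>u\<in>controls n T \<Gamma>. \<exists>S\<in>sets (PiM {..<N} (\<lambda>_. Pw)).
                   measure (PiM {..<N} (\<lambda>_. Pw)) S \<ge> 1 - \<beta> \<and>
                   (\<forall>ws\<in>S. distr Pw (Mtraj n T) (traj_vec n T p u) \<in> ambiguity_set n T p \<epsilon> N ws u)"
  shows "(\<forall>ws\<in>space (PiM {..<N} (\<lambda>_. Pw)).
            (SUP u\<in>controls n T \<Gamma>. Jval n T p \<epsilon> N ws u)
              = (SUP q\<in>feas3 n T p \<Gamma> N ws. ereal (obj3 n T p \<epsilon> N q))
          \<and> {u \<in> controls n T \<Gamma>. \<forall>u'\<in>controls n T \<Gamma>. Jval n T p \<epsilon> N ws u' \<le> Jval n T p \<epsilon> N ws u}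
              = fst ` {q \<in> feas3 n T p \<Gamma> N ws. \<forall>q'\<in>feas3 n T p \<Gamma> N ws. obj3 n T p \<epsilon> N q' \<le> obj3 n T p \<epsilon> N q})
       \<and> (\<forall>u\<in>controls n T \<Gamma>. \<exists>S\<in>sets (PiM {..<N} (\<lambda>_. Pw)).
            measure (PiM {..<N} (\<lambda>_. Pw)) S \<ge> 1 - \<beta> \<and>
            (\<forall>ws\<in>S. \<forall>q\<in>feas3 n T p \<Gamma> N ws. fst q = u \<longrightarrow>
               obj3 n T p \<epsilon> N q \<le> (\<integral>x. Hcost n T u x \<partial>(distr Pw (Mtraj n T) (traj_vec n T p u)))))"
proof -
  have fstc: "fst q \<in> controls n T \<Gamma>" if "q \<in> feas3 n T p \<Gamma> N ws" for q ws
    using that by (auto simp: feas3_def)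
  have wd: "obj3 n T p \<epsilon> N q \<le> (\<integral>x. Hcost n T (fst q) x \<partial>Q)"
    if "q \<in> feas3 n T p \<Gamma> N ws" "Q \<in> ambiguity_set n T p \<epsilon> N ws (fst q)" for q ws Q
  proof -
    obtain u \<rho> lam \<mu> \<nu> \<eta> where q: "q = (u, \<rho>, lam, \<mu>, \<nu>, \<eta>)" by (cases q) auto
    show ?thesis using weak_duality[OF n_ge T_ge N_ge hwy_ok Gamma_pos, of u \<rho> lam \<mu> \<nu> \<eta> ws Q \<epsilon>] that eps_pos q
      by simp
  qed
  have Jlow: "ereal (obj3 n T p \<epsilon> N q) \<le> Jval n T p \<epsilon> N ws (fst q)" if "q \<in> feas3 n T p \<Gamma> N ws" for q ws
    unfolding Jval_def using wd[OF that] by (intro INF_greatest) simp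
  have Jeq: "\<exists>q\<in>feas3 n T p \<Gamma> N ws. fst q = u \<and> Jval n T p \<epsilon> N ws u = ereal (obj3 n T p \<epsilon> N q)"
    if ws: "ws \<in> space (PiM {..<N} (\<lambda>_. Pw))" and u: "u \<in> controls n T \<Gamma>" for ws u
  proof -
    have "\<forall>l<N. ws l \<in> space Pw" using ws by (auto simp: space_PiM PiE_def Pi_def)
    then have samp: "\<forall>l<N. admissible n T p u (ws l) \<and> traj_vec n T p u (ws l) \<in> Zset n T p u"
      using model u by blast
    obtain q Q where q: "q \<in> feas3 n T p \<Gamma> N ws" "fst q = u" "Q \<in> ambiguity_set n T p \<epsilon> N ws u"
      "(\<integral>x. Hcost n T u x \<partial>Q) = obj3 n T p \<epsilon> N q"
      using primal_construct[OF n_ge T_ge N_ge hwy_ok Gamma_pos eps_pos u samp] by blast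
    have "Jval n T p \<epsilon> N ws u \<le> ereal (obj3 n T p \<epsilon> N q)"
      unfolding Jval_def using q(3,4) by (metis INF_lower)
    moreover have "ereal (obj3 n T p \<epsilon> N q) \<le> Jval n T p \<epsilon> N ws u" using Jlow[OF q(1)] q(2) by simp
    ultimately show ?thesis using q(1,2) by (intro bexI[of _ q]) auto
  qed
  have part1: "(SUP u\<in>controls n T \<Gamma>. Jval n T p \<epsilon> N ws u)
              = (SUP q\<in>feas3 n T p \<Gamma> N ws. ereal (obj3 n T p \<epsilon> N q))
          \<and> {u \<in> controls n T \<Gamma>. \<forall>u'\<in>controls n T \<Gamma>. Jval n T p \<epsilon> N ws u' \<le> Jval n T p \<epsilon> N ws u}
              = fst ` {q \<in> feas3 n T p \<Gamma> N ws. \<forall>q'\<in>feas3 n T p \<Gamma> N ws. obj3 n T p \<epsilon> N q' \<le> obj3 n T p \<epsilon> N q}"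
    if ws: "ws \<in> space (PiM {..<N} (\<lambda>_. Pw))" for ws
  proof
    show "(SUP u\<in>controls n T \<Gamma>. Jval n T p \<epsilon> N ws u) = (SUP q\<in>feas3 n T p \<Gamma> N ws. ereal (obj3 n T p \<epsilon> N q))"
    proof (rule antisym)
      show "(SUP u\<in>controls n T \<Gamma>. Jval n T p \<epsilon> N ws u) \<le> (SUP q\<in>feas3 n T p \<Gamma> N ws. ereal (obj3 n T p \<epsilon> N q))"
      proof (rule SUP_least)
        fix u assume "u \<in> controls n T \<Gamma>"
        then obtain q where "q \<in> feas3 n T p \<Gamma> N ws" "Jval n T p \<epsilon> N ws u = ereal (obj3 n T p \<epsilon> N q)"
          using Jeq[OF ws] by blast
        then show "Jval n T p \<epsilon> N ws u \<le> (SUP q\<in>feas3 n T p \<Gamma> N ws. ereal (obj3 n T p \<epsilon> N q))"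
          by (metis SUP_upper)
      qed
      show "(SUP q\<in>feas3 n T p \<Gamma> N ws. ereal (obj3 n T p \<epsilon> N q)) \<le> (SUP u\<in>controls n T \<Gamma>. Jval n T p \<epsilon> N ws u)"
      proof (rule SUP_least)
        fix q assume q: "q \<in> feas3 n T p \<Gamma> N ws"
        have "Jval n T p \<epsilon> N ws (fst q) \<le> (SUP u\<in>controls n T \<Gamma>. Jval n T p \<epsilon> N ws u)"
          using fstc[OF q] by (rule SUP_upper)
        then show "ereal (obj3 n T p \<epsilon> N q) \<le> (SUP u\<in>controls n T \<Gamma>. Jval n T p \<epsilon> N ws u)"
          using Jlow[OF q] by (rule order_trans[rotated])
      qed
    qed
    show "{u \<in> controls n T \<Gamma>. \<forall>u'\<in>controls n T \<Gamma>. Jval n T p \<epsilon> N ws u' \<le> Jval n T p \<epsilon> N ws u}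
              = fst ` {q \<in> feas3 n T p \<Gamma> N ws. \<forall>q'\<in>feas3 n T p \<Gamma> N ws. obj3 n T p \<epsilon> N q' \<le> obj3 n T p \<epsilon> N q}"
    proof
      show "{u \<in> controls n T \<Gamma>. \<forall>u'\<in>controls n T \<Gamma>. Jval n T p \<epsilon> N ws u' \<le> Jval n T p \<epsilon> N ws u}
              \<subseteq> fst ` {q \<in> feas3 n T p \<Gamma> N ws. \<forall>q'\<in>feas3 n T p \<Gamma> N ws. obj3 n T p \<epsilon> N q' \<le> obj3 n T p \<epsilon> N q}"
      proof
        fix u assume "u \<in> {u \<in> controls n T \<Gamma>. \<forall>u'\<in>controls n T \<Gamma>. Jval n T p \<epsilon> N ws u' \<le> Jval n T p \<epsilon> N ws u}"
        then have u: "u \<in> controls n T \<Gamma>" and opt: "\<forall>u'\<in>controls n T \<Gamma>. Jval n T p \<epsilon> N ws u' \<le> Jval n T p \<epsilon> N ws u"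
          by auto
        obtain q where q: "q \<in> feas3 n T p \<Gamma> N ws" "fst q = u" "Jval n T p \<epsilon> N ws u = ereal (obj3 n T p \<epsilon> N q)"
          using Jeq[OF ws u] by blast
        have "obj3 n T p \<epsilon> N q' \<le> obj3 n T p \<epsilon> N q" if q': "q' \<in> feas3 n T p \<Gamma> N ws" for q'
        proof -
          have "ereal (obj3 n T p \<epsilon> N q') \<le> Jval n T p \<epsilon> N ws (fst q')" by (rule Jlow[OF q'])
          also have "\<dots> \<le> Jval n T p \<epsilon> N ws u" using opt fstc[OF q'] by blast
          finally show ?thesis using q(3) by simp
        qed
        then show "u \<in> fst ` {q \<in> feas3 n T p \<Gamma> N ws. \<forall>q'\<in>feas3 n T p \<Gamma> N ws. obj3 n T p \<epsilon> N q' \<le> obj3 n T p \<epsilon> N q}"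
          using q by (intro image_eqI[of _ _ q]) auto
      qed
      show "fst ` {q \<in> feas3 n T p \<Gamma> N ws. \<forall>q'\<in>feas3 n T p \<Gamma> N ws. obj3 n T p \<epsilon> N q' \<le> obj3 n T p \<epsilon> N q}
          \<subseteq> {u \<in> controls n T \<Gamma>. \<forall>u'\<in>controls n T \<Gamma>. Jval n T p \<epsilon> N ws u' \<le> Jval n T p \<epsilon> N ws u}"
      proof
        fix u assume "u \<in> fst ` {q \<in> feas3 n T p \<Gamma> N ws. \<forall>q'\<in>feas3 n T p \<Gamma> N ws. obj3 n T p \<epsilon> N q' \<le> obj3 n T p \<epsilon> N q}"
        then obtain q where q: "q \<in> feas3 n T p \<Gamma> N ws" "u = fst q"
          and opt: "\<forall>q'\<in>feas3 n T p \<Gamma> N ws. obj3 n T p \<epsilon> N q' \<le> obj3 n T p \<epsilon> N q" by blast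
        have "Jval n T p \<epsilon> N ws u' \<le> Jval n T p \<epsilon> N ws u" if u': "u' \<in> controls n T \<Gamma>" for u'
        proof -
          obtain q' where q': "q' \<in> feas3 n T p \<Gamma> N ws" "Jval n T p \<epsilon> N ws u' = ereal (obj3 n T p \<epsilon> N q')"
            using Jeq[OF ws u'] by blast
          have "ereal (obj3 n T p \<epsilon> N q') \<le> ereal (obj3 n T p \<epsilon> N q)" using opt q'(1) by simp
          also have "\<dots> \<le> Jval n T p \<epsilon> N ws u" using Jlow[OF q(1)] q(2) by simp
          finally show ?thesis using q'(2) by simp
        qed
        then show "u \<in> {u \<in> controls n T \<Gamma>. \<forall>u'\<in>controls n T \<Gamma>. Jval n T p \<epsilon> N ws u' \<le> Jval n T p \<epsilon> N ws u}"
          using fstc[OF q(1)] q(2) by auto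
      qed
    qed
  qed
  have part2: "\<exists>S\<in>sets (PiM {..<N} (\<lambda>_. Pw)).
            measure (PiM {..<N} (\<lambda>_. Pw)) S \<ge> 1 - \<beta> \<and>
            (\<forall>ws\<in>S. \<forall>q\<in>feas3 n T p \<Gamma> N ws. fst q = u \<longrightarrow>
               obj3 n T p \<epsilon> N q \<le> (\<integral>x. Hcost n T u x \<partial>(distr Pw (Mtraj n T) (traj_vec n T p u))))"
    if u: "u \<in> controls n T \<Gamma>" for u
  proof -
    obtain S where S: "S \<in> sets (PiM {..<N} (\<lambda>_. Pw))" "measure (PiM {..<N} (\<lambda>_. Pw)) S \<ge> 1 - \<beta>"
      "\<forall>ws\<in>S. distr Pw (Mtraj n T) (traj_vec n T p u) \<in> ambiguity_set n T p \<epsilon> N ws u"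
      using radius u by blast
    show ?thesis
    proof (intro bexI[OF _ S(1)] conjI S(2) ballI impI)
      fix ws q assume "ws \<in> S" "q \<in> feas3 n T p \<Gamma> N ws" "fst q = u"
      then show "obj3 n T p \<epsilon> N q \<le> (\<integral>x. Hcost n T u x \<partial>(distr Pw (Mtraj n T) (traj_vec n T p u)))"
        using wd[of q ws] S(3) by auto
    qed
  qed
  show ?thesis using part1 part2 by blast
qed

end
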